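(* For every $\varepsilon>0$ there exists a constant $N_\varepsilon>0$ such that the following holds. Let $d_{n,m}$ be the weighted number of meanders ending at $(n,m)$, and let $\tilde d_{n,m}$ be the weighted number of those meanders ending at $(n,m)$ that pass through no point $(2x,2y)$ (with $x,y$ integers) satisfying $x>N_\varepsilon$ and $y>x^{3/4}$. Then $d_{2n,0}\le(1+\varepsilon)\,\tilde d_{2n,0}$ for all $n>0$.
   Context: A meander is a lattice path from $(0,0)$ with steps $U=(1,1)$ and $D=(1,-1)$ never going below $y=0$. An up step starting at $(a,b)$ has weight $(a-b+2)/(a+b+2)$, the weight of a meander is the product of its up-step weights, and a weighted number of meanders is the sum of their weights. *)

theory Defs
  imports Complex_Main
begin

text \<open>A path of length n is a list of steps; True = U = (1,1), False = D = (1,-1).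
  After k steps the path is at the point (k, height xs k).\<close>

definition height :: "bool list \<Rightarrow> nat \<Rightarrow> int" where
  "height xs k = (\<Sum>s\<leftarrow>take k xs. if s then 1 else -1)"

definition meander :: "bool list \<Rightarrow> bool" where
  "meander xs \<longleftrightarrow> (\<forall>k\<le>length xs. height xs k \<ge> 0)"

definition mweight :: "bool list \<Rightarrow> real" where
  "mweight xs = (\<Prod>k<length xs. if xs ! k
      then (real k - real_of_int (height xs k) + 2) / (real k + real_of_int (height xs k) + 2)
      else 1)"

definition meanders_to :: "nat \<Rightarrow> int \<Rightarrow> bool list set" where
  "meanders_to n m = {xs. length xs = n \<and> meander xs \<and> height xs n = m}"

definition dnum :: "nat \<Rightarrow> int \<Rightarrow> real" where
  "dnum n m = (\<Sum>xs\<in>meanders_to n m. mweight xs)"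

definition passes_through :: "bool list \<Rightarrow> int \<Rightarrow> int \<Rightarrow> bool" where
  "passes_through xs p q \<longleftrightarrow> (\<exists>k\<le>length xs. int k = p \<and> height xs k = q)"

definition hits_bad :: "real \<Rightarrow> bool list \<Rightarrow> bool" where
  "hits_bad N xs \<longleftrightarrow> (\<exists>x y::int. real_of_int x > N \<and> real_of_int y > real_of_int x powr (3/4)
      \<and> passes_through xs (2*x) (2*y))"

definition dtilde :: "real \<Rightarrow> nat \<Rightarrow> int \<Rightarrow> real" where
  "dtilde N n m = (\<Sum>xs\<in>{xs\<in>meanders_to n m. \<not> hits_bad N xs}. mweight xs)"

end

theory Submission
  imports Defs
begin

lemma height_0[simp]: "height xs 0 = 0"
  by (simp add: height_def)

lemma height_Suc: "k < length xs \<Longrightarrow> height xs (Suc k) = height xs k + (if xs!k then 1 else -1)"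
  by (simp add: height_def take_Suc_conv_app_nth)

lemma height_ge_len: "length xs \<le> k \<Longrightarrow> height xs k = height xs (length xs)"
  by (simp add: height_def)

lemma height_step: "k < length xs \<Longrightarrow> height xs (Suc k) = height xs k + 1 \<or> height xs (Suc k) = height xs k - 1"
  by (simp add: height_Suc)

lemma nth_iff_height: "k < length xs \<Longrightarrow> xs!k \<longleftrightarrow> height xs k < height xs (Suc k)"
  by (simp add: height_Suc)

lemma height_le: "height xs k \<le> int k"
proof (induction k)
  case 0 then show ?case by simp
next
  case (Suc k)
  show ?case
  proof (cases "k < length xs")
    case True then show ?thesis using Suc height_Suc[OF True] by auto
  next
    case False
    then have "height xs (Suc k) = height xs k" using height_ge_len[of xs k] height_ge_len[of xs "Suc k"] by simp
    then show ?thesis using Suc by simp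
  qed
qed

definition list_of :: "(nat \<Rightarrow> int) \<Rightarrow> nat \<Rightarrow> bool list" where
  "list_of g L = map (\<lambda>k. g k < g (Suc k)) [0..<L]"

lemma length_list_of[simp]: "length (list_of g L) = L"
  by (simp add: list_of_def)

lemma nth_list_of: "k < L \<Longrightarrow> list_of g L ! k = (g k < g (Suc k))"
  by (simp add: list_of_def)

lemma height_list_of:
  assumes "\<forall>k<L. g (Suc k) = g k + 1 \<or> g (Suc k) = g k - 1" "k \<le> L"
  shows "height (list_of g L) k = g k - g 0"
  using assms(2)
proof (induction k)
  case 0 then show ?case by simp
next
  case (Suc k)
  then have k: "k < L" by simp
  have "height (list_of g L) (Suc k) = height (list_of g L) k + (if g k < g (Suc k) then 1 else -1)"
    using height_Suc[of k "list_of g L"] k by (simp add: nth_list_of)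
  then show ?case using Suc k assms(1) by auto
qed

lemma list_eq_by_heights:
  assumes "length xs = length ys" "\<forall>k\<le>length xs. height xs k = height ys k"
  shows "xs = ys"
proof (rule nth_equalityI)
  show "length xs = length ys" by fact
  fix i assume "i < length xs"
  then show "xs ! i = ys ! i"
    using nth_iff_height[of i xs] nth_iff_height[of i ys] assms by auto
qed

definition w :: "nat \<Rightarrow> int \<Rightarrow> real" where
  "w a b = (real a - real_of_int b + 2) / (real a + real_of_int b + 2)"

definition F :: "(nat \<Rightarrow> int) \<Rightarrow> nat \<Rightarrow> real" where
  "F H k = (if H k < H (Suc k) then w k (H k) else 1)"

lemma mweight_F: "mweight xs = (\<Prod>k<length xs. F (height xs) k)"
  unfolding mweight_def F_def w_def
  by (rule prod.cong) (auto simp: nth_iff_height)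



definition fm :: "(nat \<Rightarrow> int) \<Rightarrow> nat \<Rightarrow> nat \<Rightarrow> int" where
  "fm H t k = Min (H ` {k..t})"
definition rm :: "(nat \<Rightarrow> int) \<Rightarrow> nat \<Rightarrow> nat \<Rightarrow> int" where
  "rm H t k = Min (H ` {t..k})"
definition gf :: "(nat \<Rightarrow> int) \<Rightarrow> nat \<Rightarrow> nat \<Rightarrow> nat \<Rightarrow> nat \<Rightarrow> nat \<Rightarrow> int" where
  "gf H y s t T k = (if k \<le> s then H k else if k \<le> t then H k - 2*(fm H t k - int y)
      else if k \<le> T then H k - 2*(rm H t k - int y) else H k)"

lemma fm_le: "k \<le> i \<Longrightarrow> i \<le> t \<Longrightarrow> fm H t k \<le> H i"
  unfolding fm_def by (rule Min_le) auto
lemma fm_ge: "k \<le> t \<Longrightarrow> (\<And>i. k \<le> i \<Longrightarrow> i \<le> t \<Longrightarrow> c \<le> H i) \<Longrightarrow> c \<le> fm H t k"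
  unfolding fm_def by (subst Min_ge_iff) auto
lemma fm_in: "k \<le> t \<Longrightarrow> \<exists>i. k \<le> i \<and> i \<le> t \<and> fm H t k = H i"
proof -
  assume "k \<le> t"
  then have "Min (H ` {k..t}) \<in> H ` {k..t}" by (intro Min_in) auto
  then show ?thesis unfolding fm_def by auto
qed
lemma fm_t: "fm H t t = H t"
  unfolding fm_def by simp
lemma fm_Suc: "k < t \<Longrightarrow> fm H t k = min (H k) (fm H t (Suc k))"
proof -
  assume "k < t"
  then have "{k..t} = insert k {Suc k..t}" by auto
  then show ?thesis unfolding fm_def using \<open>k < t\<close> by simp
qed
lemma fm_mono: "i \<le> k \<Longrightarrow> k \<le> t \<Longrightarrow> fm H t i \<le> fm H t k"
  by (rule fm_ge) (auto intro: fm_le)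

lemma rm_le: "t \<le> i \<Longrightarrow> i \<le> k \<Longrightarrow> rm H t k \<le> H i"
  unfolding rm_def by (rule Min_le) auto
lemma rm_ge: "t \<le> k \<Longrightarrow> (\<And>i. t \<le> i \<Longrightarrow> i \<le> k \<Longrightarrow> c \<le> H i) \<Longrightarrow> c \<le> rm H t k"
  unfolding rm_def by (subst Min_ge_iff) auto
lemma rm_in: "t \<le> k \<Longrightarrow> \<exists>i. t \<le> i \<and> i \<le> k \<and> rm H t k = H i"
proof -
  assume "t \<le> k"
  then have "Min (H ` {t..k}) \<in> H ` {t..k}" by (intro Min_in) auto
  then show ?thesis unfolding rm_def by auto
qed
lemma rm_t: "rm H t t = H t"
  unfolding rm_def by simp
lemma rm_Suc: "t \<le> k \<Longrightarrow> rm H t (Suc k) = min (rm H t k) (H (Suc k))"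
proof -
  assume "t \<le> k"
  then have "{t..Suc k} = insert (Suc k) {t..k}" by auto
  then show ?thesis unfolding rm_def using \<open>t \<le> k\<close> by (simp add: min.commute)
qed
lemma rm_mono: "t \<le> i \<Longrightarrow> i \<le> k \<Longrightarrow> rm H t k \<le> rm H t i"
  by (rule rm_ge) (auto intro: rm_le)

locale cls =
  fixes H :: "nat \<Rightarrow> int" and L t y s T :: nat
  assumes step: "\<And>k. k < L \<Longrightarrow> H (Suc k) = H k + 1 \<or> H (Suc k) = H k - 1"
    and H0: "H 0 = 0" and nonneg: "\<And>k. k \<le> L \<Longrightarrow> H k \<ge> 0"
    and ht: "H t = 2 * int y" and y1: "y \<ge> 1"
    and st: "s < t" and Hs: "H s = int y" and ab1: "\<And>k. s < k \<Longrightarrow> k \<le> t \<Longrightarrow> H k > int y"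
    and tT: "t < T" and TL: "T \<le> L" and HT: "H T = int y"
    and ab2: "\<And>k. t \<le> k \<Longrightarrow> k < T \<Longrightarrow> H k > int y"
begin

lemma Hle: "k \<le> L \<Longrightarrow> H k \<le> int k"
proof (induction k)
  case 0 then show ?case using H0 by simp
next
  case (Suc k) then show ?case using step[of k] by auto
qed

lemma fm_s: "fm H t s = int y"
proof -
  have "fm H t s \<le> H s" using st by (intro fm_le) auto
  moreover have "int y \<le> fm H t s"
    using st Hs ab1 by (intro fm_ge) (auto simp: le_less)
  ultimately show ?thesis using Hs by simp
qed

lemma fm_ge_y: "s \<le> k \<Longrightarrow> k \<le> t \<Longrightarrow> int y \<le> fm H t k"
  using fm_mono[of s k t H] fm_s by simp

lemma fm_le_2y: "k \<le> t \<Longrightarrow> fm H t k \<le> 2 * int y"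
  using fm_le[of k t t H] ht by simp

lemma rm_T: "rm H t T = int y"
proof -
  have "rm H t T \<le> H T" using tT by (intro rm_le) auto
  moreover have "int y \<le> rm H t T"
    using tT HT ab2 by (intro rm_ge) (auto simp: le_less)
  ultimately show ?thesis using HT by simp
qed

lemma rm_ge_y1: "t \<le> k \<Longrightarrow> k < T \<Longrightarrow> int y + 1 \<le> rm H t k"
  using ab2 by (intro rm_ge) force+

lemma rm_ge_y: "t \<le> k \<Longrightarrow> k \<le> T \<Longrightarrow> int y \<le> rm H t k"
  using rm_ge_y1[of k] rm_T by (cases "k = T") auto

lemma rm_le_2y: "t \<le> k \<Longrightarrow> rm H t k \<le> 2 * int y"
  using rm_le[of t t k H] ht by simp

abbreviation "g \<equiv> gf H y s t T"

lemma g_pre: "k \<le> s \<Longrightarrow> g k = H k"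
  by (simp add: gf_def)
lemma g_mid1: "s \<le> k \<Longrightarrow> k \<le> t \<Longrightarrow> g k = H k - 2*(fm H t k - int y)"
  using fm_s by (auto simp: gf_def)
lemma g_mid2: "t \<le> k \<Longrightarrow> k \<le> T \<Longrightarrow> g k = H k - 2*(rm H t k - int y)"
  using st fm_t[of H t] rm_t[of H t] by (auto simp: gf_def)
lemma g_post: "T \<le> k \<Longrightarrow> g k = H k"
  using st tT rm_T by (auto simp: gf_def)

lemma g_step: "k < L \<Longrightarrow> g (Suc k) = g k + 1 \<or> g (Suc k) = g k - 1"
proof -
  assume kL: "k < L"
  consider "Suc k \<le> s" | "s \<le> k \<and> Suc k \<le> t" | "t \<le> k \<and> Suc k \<le> T" | "T \<le> k"
    using st tT by linarith
  then show ?thesis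
  proof cases
    case 1 then show ?thesis using g_pre[of k] g_pre[of "Suc k"] step[OF kL] by simp
  next
    case 2
    then have e: "fm H t k = min (H k) (fm H t (Suc k))" by (intro fm_Suc) auto
    have "fm H t (Suc k) \<le> H (Suc k)" using 2 by (intro fm_le) auto
    then show ?thesis using g_mid1[of k] g_mid1[of "Suc k"] 2 e step[OF kL] by (auto simp: min_def)
  next
    case 3
    then have e: "rm H t (Suc k) = min (rm H t k) (H (Suc k))" by (intro rm_Suc) auto
    have "rm H t k \<le> H k" using 3 by (intro rm_le) auto
    then show ?thesis using g_mid2[of k] g_mid2[of "Suc k"] 3 e step[OF kL] by (auto simp: min_def)
  next
    case 4 then show ?thesis using g_post[of k] g_post[of "Suc k"] step[OF kL] by simp
  qed
qed

lemma g_nonneg: "k \<le> L \<Longrightarrow> g k \<ge> 0"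
proof -
  assume kL: "k \<le> L"
  consider "k \<le> s" | "s \<le> k \<and> k \<le> t" | "t \<le> k \<and> k \<le> T" | "T \<le> k"
    using st tT by linarith
  then show ?thesis
  proof cases
    case 1 then show ?thesis using g_pre nonneg kL by simp
  next
    case 2
    then show ?thesis using g_mid1[of k] fm_le[of k k t H] fm_le_2y[of k] by auto
  next
    case 3
    then show ?thesis using g_mid2[of k] rm_le[of t k k H] rm_le_2y[of k] by auto
  next
    case 4 then show ?thesis using g_post nonneg kL by simp
  qed
qed

lemma g0: "g 0 = 0" using g_pre H0 by simp

end


lemma frac_le2: fixes x y x' y' :: real assumes "0 < y" "0 < y'" "x * y' \<le> x' * y" shows "x / y \<le> x' / y'"
  using assms by (simp add: divide_simps)

lemma w_pos: "0 \<le> b \<Longrightarrow> b \<le> int a + 1 \<Longrightarrow> 0 < w a b"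
  unfolding w_def by (intro divide_pos_pos) linarith+

lemma w_mono_a: assumes "0 \<le> b" "b \<le> int a + 1" "a \<le> a'" shows "w a b \<le> w a' b"
proof -
  define B where "B = real_of_int b"
  have b: "B \<le> real a + 1" "0 \<le> B" using assms unfolding B_def by linarith+
  have a: "real a \<le> real a'" using assms by simp
  have eq: "(real a' - B + 2) * (real a + B + 2) - (real a - B + 2) * (real a' + B + 2) = 2*B*(real a' - real a)"
    by (simp add: algebra_simps)
  have "0 \<le> 2*B*(real a' - real a)" using a b by simp
  then have "(real a - B + 2) * (real a' + B + 2) \<le> (real a' - B + 2) * (real a + B + 2)"
    using eq by linarith
  then show ?thesis unfolding w_def B_def[symmetric] using b a
    by (intro frac_le2) auto
qed

lemma w_anti_b: assumes "0 \<le> b'" "b' \<le> b" "b \<le> int a + 1" shows "w a b \<le> w a b'"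
proof -
  define B where "B = real_of_int b"
  define B' where "B' = real_of_int b'"
  have b: "B \<le> real a + 1" "0 \<le> B'" "B' \<le> B" using assms unfolding B_def B'_def by linarith+
  have eq: "(real a - B' + 2) * (real a + B + 2) - (real a - B + 2) * (real a + B' + 2) = 2*(B - B')*(real a + 2)"
    by (simp add: algebra_simps)
  have "0 \<le> 2*(B - B')*(real a + 2)" using b by simp
  then have "(real a - B + 2) * (real a + B' + 2) \<le> (real a - B' + 2) * (real a + B + 2)"
    using eq by linarith
  then show ?thesis unfolding w_def B_def[symmetric] B'_def[symmetric] using b
    by (intro frac_le2) auto
qed

lemma w_low2: assumes "2 \<le> b" "b \<le> int a" shows "(1 + 4 / (real a + 1)) * w a b \<le> w a (b - 2)"
proof -
  define u where "u = real a - real_of_int b + 2"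
  define v where "v = real a + real_of_int b"
  have uv: "u \<ge> 2" "v \<ge> 2" "u + v = 2 * real a + 2" using assms unfolding u_def v_def by linarith+
  have w1: "w a b = u / (v + 2)" unfolding w_def u_def v_def by (simp add: algebra_simps)
  have w2: "w a (b - 2) = (u + 2) / v" unfolding w_def u_def v_def by (simp add: algebra_simps)
  have e1: "1 + 4 / (real a + 1) = (u + v + 8) / (u + v)" using uv by (simp add: field_simps)
  have sq: "4 * u * v \<le> (u + v)^2" using sum_squares_ge_zero[of "u - v" 0]
    by (simp add: power2_eq_square algebra_simps)
  have key: "(u + v + 8) * u * v \<le> (u + 2) * (v + 2) * (u + v)"
  proof -
    have "(u + 2) * (v + 2) * (u + v) - (u + v + 8) * u * v = 2 * (u + v)^2 + 4 * (u + v) - 8 * u * v"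
      by (simp add: power2_eq_square algebra_simps)
    moreover have "0 \<le> 4 * (u + v)" using uv by simp
    ultimately show ?thesis using sq by linarith
  qed
  have "(u + v + 8) / (u + v) * (u / (v + 2)) = ((u + v + 8) * u) / ((u + v) * (v + 2))" by simp
  also have "\<dots> \<le> (u + 2) / v"
  proof (rule frac_le2)
    show "0 < (u + v) * (v + 2)" using uv by (intro mult_pos_pos) auto
    show "0 < v" using uv by simp
    show "(u + v + 8) * u * v \<le> (u + 2) * ((u + v) * (v + 2))" using key by (simp add: algebra_simps)
  qed
  finally show ?thesis using w1 w2 e1 by simp
qed



lemma prod_int_insert_top: "a \<le> b \<Longrightarrow> (\<Prod>x\<in>{a..<b+1::int}. f x) = f b * (\<Prod>x\<in>{a..<b}. f x)"
proof -
  assume "a \<le> b"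
  then have "{a..<b+1} = insert b {a..<b}" by auto
  then show ?thesis by simp
qed

context cls
begin

lemma tL: "t \<le> L" using tT TL by simp
lemma y2t: "2 * int y \<le> int t" using Hle[OF tL] ht by simp

lemma g_le_H: "k \<le> L \<Longrightarrow> g k \<le> H k"
proof -
  assume kL: "k \<le> L"
  consider "k \<le> s" | "s \<le> k \<and> k \<le> t" | "t \<le> k \<and> k \<le> T" | "T \<le> k"
    using st tT by linarith
  then show ?thesis
  proof cases
    case 2 then show ?thesis using g_mid1[of k] fm_ge_y[of k] by auto
  next
    case 3 then show ?thesis using g_mid2[of k] rm_ge_y[of k] by auto
  qed (auto simp: g_pre g_post)
qed

lemma FH_pos: "k < L \<Longrightarrow> 0 < F H k"
  unfolding F_def using nonneg[of k] Hle[of k] by (auto intro!: w_pos)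

lemma Fg_pos: "k < L \<Longrightarrow> 0 < F g k"
  unfolding F_def using g_nonneg[of k] g_le_H[of k] Hle[of k] by (auto intro!: w_pos)

lemma segA: "k < s \<Longrightarrow> F g k = F H k"
  unfolding F_def using g_pre[of k] g_pre[of "Suc k"] by simp

lemma segD: "T \<le> k \<Longrightarrow> F g k = F H k"
  unfolding F_def using g_post[of k] g_post[of "Suc k"] by simp

lemma stepB:
  assumes m: "s \<le> m" "m < t"
  shows "(fm H t (Suc m) = fm H t m \<and> F H m \<le> F g m) \<or>
         (fm H t (Suc m) = fm H t m + 1 \<and> F H m * (1 / w t (fm H t m)) \<le> F g m)"
proof -
  have mL: "m < L" using m tL by simp
  have e: "fm H t m = min (H m) (fm H t (Suc m))" using m by (intro fm_Suc) auto
  have le: "fm H t (Suc m) \<le> H (Suc m)" using m by (intro fm_le) auto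
  have g1: "g m = H m - 2*(fm H t m - int y)" using m by (intro g_mid1) auto
  have g2: "g (Suc m) = H (Suc m) - 2*(fm H t (Suc m) - int y)" using m by (intro g_mid1) auto
  have Hm: "0 \<le> H m" "H m \<le> int m" using nonneg[of m] Hle[of m] mL by auto
  have fy: "int y \<le> fm H t m" using fm_ge_y m by simp
  consider "H (Suc m) = H m + 1" "H m < fm H t (Suc m)" | "H (Suc m) = H m + 1" "fm H t (Suc m) \<le> H m"
    | "H (Suc m) = H m - 1" using step[OF mL] by linarith
  then show ?thesis
  proof cases
    case 1
    then have f: "fm H t m = H m" "fm H t (Suc m) = fm H t m + 1" using e le by auto
    have Fg: "F g m = 1" unfolding F_def using g1 g2 f 1 by simp
    have FH: "F H m = w m (H m)" unfolding F_def using 1 by simp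
    have "H m < 2 * int y" using f fm_le_2y[of "Suc m"] m by simp
    then have "H m \<le> int t + 1" using y2t by simp
    then have wt: "0 < w t (H m)" "w m (H m) \<le> w t (H m)"
      using Hm m by (auto intro!: w_pos w_mono_a)
    have "F H m * (1 / w t (fm H t m)) \<le> 1"
      using wt f FH by (simp add: divide_simps)
    then show ?thesis using f Fg by auto
  next
    case 2
    then have f: "fm H t m = fm H t (Suc m)" using e by auto
    have Fg: "F g m = w m (g m)" unfolding F_def using g1 g2 f 2 by simp
    have FH: "F H m = w m (H m)" unfolding F_def using 2 by simp
    have "w m (H m) \<le> w m (g m)"
      using g_nonneg[of m] mL fy g1 Hm by (intro w_anti_b) auto
    then show ?thesis using f Fg FH by auto
  next
    case 3
    then have f: "fm H t m = fm H t (Suc m)" using e le by auto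
    have "F g m = 1" "F H m = 1" unfolding F_def using g1 g2 f 3 by auto
    then show ?thesis using f by auto
  qed
qed

lemma GammaB_nonneg: "s \<le> m \<Longrightarrow> m \<le> t \<Longrightarrow> 0 \<le> (\<Prod>b\<in>{int y..<fm H t m}. 1 / w t b)"
proof -
  assume m: "s \<le> m" "m \<le> t"
  have "fm H t m \<le> 2 * int y" using fm_le_2y m by simp
  then show ?thesis using y2t
    by (intro prod_nonneg) (auto intro!: less_imp_le[OF w_pos])
qed

lemma segB:
  assumes "d \<le> t - s"
  shows "(\<Prod>k\<in>{s..<s+d}. F H k) * (\<Prod>b\<in>{int y..<fm H t (s+d)}. 1 / w t b) \<le> (\<Prod>k\<in>{s..<s+d}. F g k)"
  using assms
proof (induction d)
  case 0 then show ?case using fm_s by simp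
next
  case (Suc d)
  define m where "m = s + d"
  have m: "s \<le> m" "m < t" using Suc.prems st unfolding m_def by auto
  have IH: "(\<Prod>k\<in>{s..<m}. F H k) * (\<Prod>b\<in>{int y..<fm H t m}. 1 / w t b) \<le> (\<Prod>k\<in>{s..<m}. F g k)"
    using Suc unfolding m_def by simp
  have PH: "(\<Prod>k\<in>{s..<Suc m}. F H k) = (\<Prod>k\<in>{s..<m}. F H k) * F H m"
    using m by (simp add: prod.atLeastLessThan_Suc)
  have Pg: "(\<Prod>k\<in>{s..<Suc m}. F g k) = (\<Prod>k\<in>{s..<m}. F g k) * F g m"
    using m by (simp add: prod.atLeastLessThan_Suc)
  have n1: "0 \<le> (\<Prod>k\<in>{s..<m}. F H k)" using m tL FH_pos by (intro prod_nonneg) (auto intro: less_imp_le)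
  have n2: "0 \<le> (\<Prod>b\<in>{int y..<fm H t m}. 1 / w t b)" using GammaB_nonneg m by simp
  have n3: "0 \<le> F H m" using FH_pos m tL by (auto intro: less_imp_le)
  have n5: "0 \<le> (\<Prod>k\<in>{s..<m}. F g k)" using m tL Fg_pos by (intro prod_nonneg) (auto intro: less_imp_le)
  have fy: "int y \<le> fm H t m" using fm_ge_y m by simp
  from stepB[OF m] show ?case
  proof
    assume a: "fm H t (Suc m) = fm H t m \<and> F H m \<le> F g m"
    have "(\<Prod>k\<in>{s..<m}. F H k) * F H m * (\<Prod>b\<in>{int y..<fm H t m}. 1 / w t b)
        = ((\<Prod>k\<in>{s..<m}. F H k) * (\<Prod>b\<in>{int y..<fm H t m}. 1 / w t b)) * F H m" by simp
    also have "\<dots> \<le> (\<Prod>k\<in>{s..<m}. F g k) * F g m"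
      using IH a n1 n2 n3 n5 by (intro mult_mono) auto
    finally show ?thesis using PH Pg a unfolding m_def by simp
  next
    assume a: "fm H t (Suc m) = fm H t m + 1 \<and> F H m * (1 / w t (fm H t m)) \<le> F g m"
    have G: "(\<Prod>b\<in>{int y..<fm H t (Suc m)}. 1 / w t b) = 1 / w t (fm H t m) * (\<Prod>b\<in>{int y..<fm H t m}. 1 / w t b)"
      using a fy by (simp add: prod_int_insert_top)
    have n4: "0 \<le> F H m * (1 / w t (fm H t m))"
      proof -
      have "fm H t m \<le> 2 * int y" using fm_le_2y m by simp
      then have "0 < w t (fm H t m)" using fy y2t by (intro w_pos) auto
      then show ?thesis using n3 by simp
    qed
    have "(\<Prod>k\<in>{s..<m}. F H k) * F H m * (1 / w t (fm H t m) * (\<Prod>b\<in>{int y..<fm H t m}. 1 / w t b))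
        = ((\<Prod>k\<in>{s..<m}. F H k) * (\<Prod>b\<in>{int y..<fm H t m}. 1 / w t b)) * (F H m * (1 / w t (fm H t m)))" by simp
    also have "\<dots> \<le> (\<Prod>k\<in>{s..<m}. F g k) * F g m"
      using IH a n1 n2 n4 n5 by (intro mult_mono) auto
    finally show ?thesis using PH Pg G unfolding m_def by simp
  qed
qed

end


lemma zsq: fixes z m :: real assumes "0 \<le> m" "m + 3 \<le> z" shows "((z+2)/z)^2 \<le> 1 + 4/(m+1)"
proof -
  have z: "z > 2" using assms by simp
  have "((z+2)/z)^2 = (z+2)^2/z^2" by (simp add: power_divide)
  also have "\<dots> \<le> (z+2)/(z-2)"
  proof (rule frac_le2)
    show "0 < z^2" using z by simp
    show "0 < z - 2" using z by simp
    have "(z+2)^2 * (z-2) = (z+2) * (z^2 - 4)" by (simp add: power2_eq_square algebra_simps)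
    also have "\<dots> \<le> (z+2) * z^2" using z by (intro mult_left_mono) auto
    finally show "(z+2)^2 * (z-2) \<le> (z+2) * z^2" .
  qed
  also have "\<dots> = 1 + 4/(z-2)" using z by (simp add: field_simps)
  also have "\<dots> \<le> 1 + 4/(m+1)" using assms by (simp add: frac_le)
  finally show ?thesis .
qed

context cls
begin

definition zz :: "nat \<Rightarrow> real" where "zz m = real_of_int (H m) + real m - real y + 2"

lemma stepC:
  assumes m: "t \<le> m" "m < T"
  shows "(rm H t (Suc m) = rm H t m \<and> zz (Suc m) = zz m \<and> F H m \<le> F g m) \<or>
         (rm H t (Suc m) = rm H t m \<and> zz (Suc m) = zz m + 2 \<and> F H m * ((zz m + 2)/zz m)^2 \<le> F g m) \<or>
         (rm H t (Suc m) = rm H t m - 1 \<and> zz (Suc m) = zz m \<and> F H m * w t (2 * int y - rm H t m) \<le> F g m)"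
proof -
  have mL: "m < L" using m TL by simp
  have e: "rm H t (Suc m) = min (rm H t m) (H (Suc m))" using m by (intro rm_Suc) auto
  have le: "rm H t m \<le> H m" using m by (intro rm_le) auto
  have g1: "g m = H m - 2*(rm H t m - int y)" using m by (intro g_mid2) auto
  have g2: "g (Suc m) = H (Suc m) - 2*(rm H t (Suc m) - int y)" using m by (intro g_mid2) auto
  have Hm: "0 \<le> H m" "H m \<le> int m" using nonneg[of m] Hle[of m] mL by auto
  have ry: "int y + 1 \<le> rm H t m" using rm_ge_y1 m by simp
  have r2: "rm H t m \<le> 2 * int y" using rm_le_2y m by simp
  consider "H (Suc m) = H m + 1" | "H (Suc m) = H m - 1" "H m = rm H t m"
    | "H (Suc m) = H m - 1" "rm H t m < H m" using step[OF mL] le by linarith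
  then show ?thesis
  proof cases
    case 1
    then have f: "rm H t (Suc m) = rm H t m" using e le by auto
    have Fg: "F g m = w m (g m)" unfolding F_def using g1 g2 f 1 by simp
    have FH: "F H m = w m (H m)" unfolding F_def using 1 by simp
    have z2: "zz (Suc m) = zz m + 2" unfolding zz_def using 1 by simp
    have gn: "0 \<le> g m" using g_nonneg[of m] mL by simp
    have "w m (H m - 2) \<le> w m (g m)" using gn g1 ry Hm by (intro w_anti_b) auto
    moreover have "(1 + 4 / (real m + 1)) * w m (H m) \<le> w m (H m - 2)"
      using ry le Hm y1 by (intro w_low2) auto
    moreover have "((zz m + 2)/zz m)^2 \<le> 1 + 4 / (real m + 1)"
    proof (rule zsq)
      show "real m + 3 \<le> zz m" unfolding zz_def using ry le y1 by linarith
    qed simp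
    moreover have "0 \<le> w m (H m)" using Hm by (intro less_imp_le[OF w_pos]) auto
    ultimately have "w m (H m) * ((zz m + 2)/zz m)^2 \<le> w m (g m)"
      by (smt (verit, ccfv_SIG) mult.commute mult_left_mono)
    then show ?thesis using f z2 Fg FH by auto
  next
    case 2
    then have f: "rm H t (Suc m) = rm H t m - 1" using e by auto
    have gm: "g m = 2 * int y - rm H t m" using g1 2 by simp
    have Fg: "F g m = w m (2 * int y - rm H t m)" unfolding F_def using g1 g2 f 2 gm by simp
    have FH: "F H m = 1" unfolding F_def using 2 by simp
    have z2: "zz (Suc m) = zz m" unfolding zz_def using 2 by simp
    have "w t (2 * int y - rm H t m) \<le> w m (2 * int y - rm H t m)"
      using r2 ry m y2t by (intro w_mono_a) auto
    then show ?thesis using f z2 Fg FH by auto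
  next
    case 3
    then have f: "rm H t (Suc m) = rm H t m" using e by auto
    have "F g m = 1" "F H m = 1" unfolding F_def using g1 g2 f 3 by auto
    moreover have "zz (Suc m) = zz m" unfolding zz_def using 3 by simp
    ultimately show ?thesis using f by auto
  qed
qed

end


context cls
begin

lemma zz_t: "zz t = real t + real y + 2" unfolding zz_def using ht by simp
lemma zz_T: "zz T = real T + 2" unfolding zz_def using HT by simp

lemma GammaC_nonneg: "t \<le> m \<Longrightarrow> m \<le> T \<Longrightarrow> 0 \<le> (\<Prod>c\<in>{0..<2 * int y - rm H t m}. w t c)"
  using y2t rm_ge_y[of m] by (intro prod_nonneg) (auto intro!: less_imp_le[OF w_pos])

lemma segC:
  assumes "d \<le> T - t"
  shows "(\<Prod>k\<in>{t..<t+d}. F H k) * (\<Prod>c\<in>{0..<2 * int y - rm H t (t+d)}. w t c) * (zz (t+d) / (real t + real y + 2))^2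
     \<le> (\<Prod>k\<in>{t..<t+d}. F g k)"
  using assms
proof (induction d)
  case 0 then show ?case using rm_t[of H t] ht zz_t by simp
next
  case (Suc d)
  define m where "m = t + d"
  have m: "t \<le> m" "m < T" using Suc.prems tT unfolding m_def by auto
  define A where "A = (\<Prod>k\<in>{t..<m}. F H k)"
  define G where "G = (\<Prod>c\<in>{0..<2 * int y - rm H t m}. w t c)"
  define Z where "Z = (zz m / (real t + real y + 2))^2"
  define B where "B = (\<Prod>k\<in>{t..<m}. F g k)"
  have IH: "A * G * Z \<le> B"
    using Suc unfolding m_def A_def G_def Z_def B_def by simp
  have PH: "(\<Prod>k\<in>{t..<Suc m}. F H k) = A * F H m"
    using m unfolding A_def by (simp add: prod.atLeastLessThan_Suc)
  have Pg: "(\<Prod>k\<in>{t..<Suc m}. F g k) = B * F g m"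
    using m unfolding B_def by (simp add: prod.atLeastLessThan_Suc)
  have mL: "m < L" using m TL by simp
  have n1: "0 \<le> A" unfolding A_def using m TL FH_pos by (intro prod_nonneg) (auto intro: less_imp_le)
  have n2: "0 \<le> G" unfolding G_def using m by (intro GammaC_nonneg) auto
  have n3: "0 \<le> F H m" using FH_pos mL by (auto intro: less_imp_le)
  have n5: "0 \<le> B" unfolding B_def using m TL Fg_pos by (intro prod_nonneg) (auto intro: less_imp_le)
  have nZ: "0 \<le> Z" unfolding Z_def by simp
  have r2: "rm H t m \<le> 2 * int y" using rm_le_2y m by simp
  have zpos: "0 < zz m" unfolding zz_def using ab2[of m] m by simp
  have key: "(A * G * Z) * X \<le> B * F g m" if "X \<le> F g m" "0 \<le> X" for X
    using IH that n5 n1 n2 nZ by (intro mult_mono) auto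
  from stepC[OF m] consider
    (a) "rm H t (Suc m) = rm H t m" "zz (Suc m) = zz m" "F H m \<le> F g m"
  | (b) "rm H t (Suc m) = rm H t m" "zz (Suc m) = zz m + 2" "F H m * ((zz m + 2)/zz m)^2 \<le> F g m"
  | (c) "rm H t (Suc m) = rm H t m - 1" "zz (Suc m) = zz m" "F H m * w t (2 * int y - rm H t m) \<le> F g m"
    by blast
  then have "(\<Prod>k\<in>{t..<Suc m}. F H k) * (\<Prod>c\<in>{0..<2 * int y - rm H t (Suc m)}. w t c) * (zz (Suc m) / (real t + real y + 2))^2
     \<le> (\<Prod>k\<in>{t..<Suc m}. F g k)"
  proof cases
    case a
    have "A * F H m * G * Z = (A * G * Z) * F H m" by simp
    also have "\<dots> \<le> B * F g m" using key a n3 by simp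
    finally show ?thesis using PH Pg a unfolding G_def Z_def by simp
  next
    case b
    have Z2: "(zz (Suc m) / (real t + real y + 2))^2 = Z * ((zz m + 2)/zz m)^2"
      unfolding Z_def using b zpos by (simp add: power_divide field_simps)
    have "A * F H m * G * (Z * ((zz m + 2)/zz m)^2) = (A * G * Z) * (F H m * ((zz m + 2)/zz m)^2)" by simp
    also have "\<dots> \<le> B * F g m" using key b n3 by simp
    finally show ?thesis using PH Pg b Z2 unfolding G_def by simp
  next
    case c
    have G2: "(\<Prod>c\<in>{0..<2 * int y - rm H t (Suc m)}. w t c) = w t (2 * int y - rm H t m) * G"
    proof -
      have e: "2 * int y - rm H t (Suc m) = 2 * int y - rm H t m + 1" using c by simp
      show ?thesis unfolding G_def e using r2 by (intro prod_int_insert_top) simp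
    qed
    have wp: "0 \<le> w t (2 * int y - rm H t m)"
      using r2 rm_ge_y[of m] m y2t by (intro less_imp_le[OF w_pos]) auto
    have "A * F H m * (w t (2 * int y - rm H t m) * G) * Z = (A * G * Z) * (F H m * w t (2 * int y - rm H t m))" by simp
    also have "\<dots> \<le> B * F g m" using key c n3 wp by simp
    finally show ?thesis using PH Pg c G2 unfolding Z_def by simp
  qed
  then show ?case unfolding m_def by simp
qed

end


context cls
begin

definition Gam :: real where
  "Gam = (\<Prod>b\<in>{int y..<2 * int y}. 1 / w t b) * (\<Prod>c\<in>{0..<int y}. w t c) * ((real T + 2) / (real t + real y + 2))^2"

lemma total: "(\<Prod>k<L. F H k) * Gam \<le> (\<Prod>k<L. F g k)"
proof -
  have split: "(\<Prod>k<L. f k) = (\<Prod>k\<in>{0..<s}. f k) * (\<Prod>k\<in>{s..<t}. f k) * (\<Prod>k\<in>{t..<T}. f k) * (\<Prod>k\<in>{T..<L}. f k)"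
    for f :: "nat \<Rightarrow> real"
    using st tT TL
    by (simp add: lessThan_atLeast0 prod.atLeastLessThan_concat)
  have A: "(\<Prod>k\<in>{0..<s}. F H k) = (\<Prod>k\<in>{0..<s}. F g k)" using segA by (intro prod.cong) auto
  have D: "(\<Prod>k\<in>{T..<L}. F H k) = (\<Prod>k\<in>{T..<L}. F g k)" using segD by (intro prod.cong) auto
  have B: "(\<Prod>k\<in>{s..<t}. F H k) * (\<Prod>b\<in>{int y..<2 * int y}. 1 / w t b) \<le> (\<Prod>k\<in>{s..<t}. F g k)"
    using segB[of "t - s"] st fm_t[of H t] ht by simp
  have C: "(\<Prod>k\<in>{t..<T}. F H k) * (\<Prod>c\<in>{0..<int y}. w t c) * ((real T + 2) / (real t + real y + 2))^2 \<le> (\<Prod>k\<in>{t..<T}. F g k)"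
    using segC[of "T - t"] tT rm_T zz_T by simp
  have nA: "0 \<le> (\<Prod>k\<in>{0..<s}. F g k)" using st tL Fg_pos by (intro prod_nonneg) (auto intro: less_imp_le)
  have nD: "0 \<le> (\<Prod>k\<in>{T..<L}. F H k)" using FH_pos by (intro prod_nonneg) (auto intro: less_imp_le)
  have nB: "0 \<le> (\<Prod>k\<in>{s..<t}. F H k) * (\<Prod>b\<in>{int y..<2 * int y}. 1 / w t b)"
  proof -
    have "0 \<le> (\<Prod>b\<in>{int y..<2 * int y}. 1 / w t b)" using GammaB_nonneg[of t] st fm_t[of H t] ht by simp
    moreover have "0 \<le> (\<Prod>k\<in>{s..<t}. F H k)" using FH_pos tL by (intro prod_nonneg) (auto intro: less_imp_le)
    ultimately show ?thesis by simp
  qed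
  have nC: "0 \<le> (\<Prod>k\<in>{t..<T}. F H k) * (\<Prod>c\<in>{0..<int y}. w t c) * ((real T + 2) / (real t + real y + 2))^2"
  proof -
    have "0 \<le> (\<Prod>c\<in>{0..<int y}. w t c)" using GammaC_nonneg[of T] tT rm_T by simp
    moreover have "0 \<le> (\<Prod>k\<in>{t..<T}. F H k)" using FH_pos TL by (intro prod_nonneg) (auto intro: less_imp_le)
    ultimately show ?thesis by simp
  qed
  have nBg: "0 \<le> (\<Prod>k\<in>{s..<t}. F g k)" using tL Fg_pos by (intro prod_nonneg) (auto intro: less_imp_le)
  have nCg: "0 \<le> (\<Prod>k\<in>{t..<T}. F g k)" using TL Fg_pos by (intro prod_nonneg) (auto intro: less_imp_le)
  have "(\<Prod>k<L. F H k) * Gam = (\<Prod>k\<in>{0..<s}. F g k) *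
      ((\<Prod>k\<in>{s..<t}. F H k) * (\<Prod>b\<in>{int y..<2 * int y}. 1 / w t b)) *
      ((\<Prod>k\<in>{t..<T}. F H k) * (\<Prod>c\<in>{0..<int y}. w t c) * ((real T + 2) / (real t + real y + 2))^2) *
      (\<Prod>k\<in>{T..<L}. F H k)"
    unfolding split[of "F H"] Gam_def A by (simp add: ac_simps)
  also have "\<dots> \<le> (\<Prod>k\<in>{0..<s}. F g k) * (\<Prod>k\<in>{s..<t}. F g k) * (\<Prod>k\<in>{t..<T}. F g k) * (\<Prod>k\<in>{T..<L}. F H k)"
  proof -
    let ?a = "\<Prod>k\<in>{0..<s}. F g k"
    let ?b1 = "(\<Prod>k\<in>{s..<t}. F H k) * (\<Prod>b\<in>{int y..<2 * int y}. 1 / w t b)"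
    let ?c1 = "(\<Prod>k\<in>{t..<T}. F H k) * (\<Prod>c\<in>{0..<int y}. w t c) * ((real T + 2) / (real t + real y + 2))^2"
    let ?b2 = "\<Prod>k\<in>{s..<t}. F g k"
    let ?c2 = "\<Prod>k\<in>{t..<T}. F g k"
    have 1: "?a * ?b1 \<le> ?a * ?b2" using B nA by (rule mult_left_mono)
    have 2: "?a * ?b1 * ?c1 \<le> ?a * ?b2 * ?c2" by (rule mult_mono[OF 1 C _ nC]) (use nA nBg in simp)
    show ?thesis using 2 nD by (rule mult_right_mono)
  qed
  also have "\<dots> = (\<Prod>k<L. F g k)" unfolding split[of "F g"] D by simp
  finally show ?thesis .
qed

end

lemma pair_factor:
  fixes y c :: int and t :: nat
  assumes "0 \<le> c" "c < y" "2 * y \<le> int t"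
  shows "w t (c + y) \<le> (real t + 2) / (real t + 2 + 2 * real_of_int y) * w t c"
proof -
  define Z where "Z = real t + 2"
  define Y where "Y = real_of_int y"
  define C where "C = real_of_int c"
  have h: "0 \<le> C" "C < Y" "2 * Y \<le> Z - 2" using assms unfolding Z_def Y_def C_def by linarith+
  have w1: "w t (c + y) = (Z - Y - C) / (Z + Y + C)" unfolding w_def Z_def Y_def C_def by (simp add: algebra_simps)
  have w2: "w t c = (Z - C) / (Z + C)" unfolding w_def Z_def C_def by (simp add: algebra_simps)
  have eq: "Z * (Z - C) * (Z + Y + C) - (Z - Y - C) * (Z + 2 * Y) * (Z + C) = 2*Y*Y*Z + 2*Y*Y*C + 2*Y*C*C"
    by (simp add: algebra_simps)
  have "0 \<le> 2*Y*Y*Z + 2*Y*Y*C + 2*Y*C*C" using h by simp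
  then have ineq: "(Z - Y - C) * ((Z + 2 * Y) * (Z + C)) \<le> Z * (Z - C) * (Z + Y + C)" using eq by (simp add: algebra_simps)
  have "(Z - Y - C) / (Z + Y + C) \<le> (Z * (Z - C)) / ((Z + 2 * Y) * (Z + C))"
    using h ineq by (intro frac_le2) (auto intro!: mult_pos_pos)
  also have "\<dots> = Z / (Z + 2 * Y) * ((Z - C) / (Z + C))" by simp
  finally show ?thesis using w1 w2 unfolding Z_def Y_def by simp
qed

lemma pair_prod:
  fixes y :: nat and t :: nat
  assumes "2 * int y \<le> int t"
  shows "(\<Prod>b\<in>{int y..<2 * int y}. w t b) \<le> ((real t + 2) / (real t + 2 + 2 * real y))^y * (\<Prod>c\<in>{0..<int y}. w t c)"
proof -
  define q where "q = (real t + 2) / (real t + 2 + 2 * real y)"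
  have im: "{int y..<2 * int y} = (\<lambda>c. c + int y) ` {0..<int y}" 
    by (auto simp: image_iff intro!: exI[where x="_ - int y"])
  have "(\<Prod>b\<in>{int y..<2 * int y}. w t b) = (\<Prod>c\<in>{0..<int y}. w t (c + int y))"
    unfolding im by (subst prod.reindex) (auto simp: inj_on_def)
  also have "\<dots> \<le> (\<Prod>c\<in>{0..<int y}. q * w t c)"
  proof (rule prod_mono)
    fix c assume c: "c \<in> {0..<int y}"
    have "0 \<le> w t (c + int y)" using c assms by (intro less_imp_le[OF w_pos]) auto
    moreover have "w t (c + int y) \<le> q * w t c" using pair_factor[of c "int y" t] c assms unfolding q_def by simp
    ultimately show "0 \<le> w t (c + int y) \<and> w t (c + int y) \<le> q * w t c" by simp
  qed
  also have "\<dots> = q ^ y * (\<Prod>c\<in>{0..<int y}. w t c)" by (simp add: prod.distrib)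
  finally show ?thesis unfolding q_def .
qed



context cls
begin

lemma rec1:
  assumes k: "s \<le> k" "k \<le> t"
  shows "H k = g k + 2 * (int y - Min (g ` {s..k}))"
proof -
  define v where "v = fm H t k"
  have lb: "2 * int y - v \<le> g i" if i: "s \<le> i" "i \<le> k" for i
  proof -
    have "fm H t i \<le> H i" using i k by (intro fm_le) auto
    moreover have "fm H t i \<le> v" unfolding v_def using i k by (intro fm_mono) auto
    ultimately show ?thesis using g_mid1[of i] i k by simp
  qed
  have "\<exists>i. s \<le> i \<and> i \<le> k \<and> g i = 2 * int y - v"
  proof -
    define S where "S = {j \<in> {s..k}. H j \<le> v}"
    have fS: "finite S" unfolding S_def by simp
    have sS: "s \<in> S" unfolding S_def v_def using k Hs fm_ge_y[of k] by auto
    define i where "i = Max S"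
    have iS: "i \<in> S" unfolding i_def using fS sS by (intro Max_in) auto
    have above: "H j > v" if "i < j" "j \<le> k" for j
    proof (rule ccontr)
      assume "\<not> H j > v"
      then have "j \<in> S" unfolding S_def using that iS unfolding S_def by auto
      then have "j \<le> i" unfolding i_def using fS by (intro Max_ge) auto
      then show False using that by simp
    qed
    have i: "s \<le> i" "i \<le> k" "H i \<le> v" using iS unfolding S_def by auto
    have Hi: "H i = v"
    proof (cases "i = k")
      case True then show ?thesis using i fm_le[of k k t H] k unfolding v_def by simp
    next
      case False
      then have "i < k" using i by simp
      then have "H (Suc i) > v" using above by simp
      moreover have "i < L" using \<open>i < k\<close> k tL by simp
      ultimately show ?thesis using step[of i] i by auto
    qed
    have fi: "fm H t i = v"
    proof (rule antisym)
      show "fm H t i \<le> v" using fm_le[of i i t H] i k Hi by simp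
      show "v \<le> fm H t i"
      proof (rule fm_ge)
        show "i \<le> t" using i k by simp
        fix j assume j: "i \<le> j" "j \<le> t"
        show "v \<le> H j"
        proof (cases "j \<le> k")
          case True then show ?thesis using above[of j] Hi j by (cases "j = i") auto
        next
          case False then show ?thesis using fm_le[of k j t H] j unfolding v_def by simp
        qed
      qed
    qed
    show ?thesis using g_mid1[of i] i k Hi fi by (intro exI[of _ i]) auto
  qed
  then obtain i where i: "s \<le> i" "i \<le> k" "g i = 2 * int y - v" by blast
  have "Min (g ` {s..k}) = 2 * int y - v"
  proof (rule antisym)
    show "Min (g ` {s..k}) \<le> 2 * int y - v" using i by (intro Min_le_iff[THEN iffD2]) (auto intro!: bexI[of _ i])
    show "2 * int y - v \<le> Min (g ` {s..k})" using lb k by (subst Min_ge_iff) auto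
  qed
  then show ?thesis using g_mid1[of k] k unfolding v_def by simp
qed

lemma rec2:
  assumes k: "t \<le> k" "k \<le> T"
  shows "H k = g k + 2 * (int y - Min (g ` {k..T}))"
proof -
  define v where "v = rm H t k"
  have lb: "2 * int y - v \<le> g i" if i: "k \<le> i" "i \<le> T" for i
  proof -
    have "rm H t i \<le> H i" using i k by (intro rm_le) auto
    moreover have "rm H t i \<le> v" unfolding v_def using i k by (intro rm_mono) auto
    ultimately show ?thesis using g_mid2[of i] i k by simp
  qed
  have "\<exists>i. k \<le> i \<and> i \<le> T \<and> g i = 2 * int y - v"
  proof -
    define S where "S = {j \<in> {k..T}. H j \<le> v}"
    have fS: "finite S" unfolding S_def by simp
    have TS: "T \<in> S" unfolding S_def v_def using k HT rm_ge_y[of k] by auto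
    define i where "i = Min S"
    have iS: "i \<in> S" unfolding i_def using fS TS by (intro Min_in) auto
    have above: "H j > v" if "k \<le> j" "j < i" for j
    proof (rule ccontr)
      assume "\<not> H j > v"
      then have "j \<in> S" unfolding S_def using that iS unfolding S_def by auto
      then have "i \<le> j" unfolding i_def using fS by (intro Min_le) auto
      then show False using that by simp
    qed
    have i: "k \<le> i" "i \<le> T" "H i \<le> v" using iS unfolding S_def by auto
    have Hi: "H i = v"
    proof (cases "i = k")
      case True then show ?thesis using i rm_le[of t k k H] k unfolding v_def by simp
    next
      case False
      then obtain j where j: "i = Suc j" "k \<le> j" using i by (cases i) auto
      then have "H j > v" using above by simp
      moreover have "j < L" using j i TL by simp
      ultimately show ?thesis using step[of j] i j by auto
    qed
    have ri: "rm H t i = v"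
    proof (rule antisym)
      show "rm H t i \<le> v" using rm_le[of t i i H] i k Hi by simp
      show "v \<le> rm H t i"
      proof (rule rm_ge)
        show "t \<le> i" using i k by simp
        fix j assume j: "t \<le> j" "j \<le> i"
        show "v \<le> H j"
        proof (cases "k \<le> j")
          case True then show ?thesis using above[of j] Hi j by (cases "j = i") auto
        next
          case False then show ?thesis using rm_le[of t j k H] j unfolding v_def by simp
        qed
      qed
    qed
    show ?thesis using g_mid2[of i] i k Hi ri by (intro exI[of _ i]) auto
  qed
  then obtain i where i: "k \<le> i" "i \<le> T" "g i = 2 * int y - v" by blast
  have "Min (g ` {k..T}) = 2 * int y - v"
  proof (rule antisym)
    show "Min (g ` {k..T}) \<le> 2 * int y - v" using i by (intro Min_le_iff[THEN iffD2]) (auto intro!: bexI[of _ i])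
    show "2 * int y - v \<le> Min (g ` {k..T})" using lb k by (subst Min_ge_iff) auto
  qed
  then show ?thesis using g_mid2[of k] k unfolding v_def by simp
qed

end

lemma inj_H:
  assumes c1: "cls H1 L t y s T" and c2: "cls H2 L t y s T"
    and eq: "\<And>k. k \<le> L \<Longrightarrow> gf H1 y s t T k = gf H2 y s t T k"
    and kL: "k \<le> L"
  shows "H1 k = H2 k"
proof -
  interpret a: cls H1 L t y s T by (rule c1)
  interpret b: cls H2 L t y s T by (rule c2)
  have TL: "T \<le> L" by (rule a.TL)
  have st: "s < t" "t < T" using a.st a.tT by auto
  have img: "gf H1 y s t T ` A = gf H2 y s t T ` A" if "A \<subseteq> {..L}" for A
    using that eq by (intro image_cong) auto
  consider "k \<le> s" | "s \<le> k \<and> k \<le> t" | "t \<le> k \<and> k \<le> T" | "T \<le> k" using st by linarith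
  then show ?thesis
  proof cases
    case 1 then show ?thesis using a.g_pre[of k] b.g_pre[of k] eq kL by simp
  next
    case 2
    have "{s..k} \<subseteq> {..L}" using 2 st TL by auto
    then show ?thesis using a.rec1[of k] b.rec1[of k] 2 img[of "{s..k}"] eq kL by simp
  next
    case 3
    have "{k..T} \<subseteq> {..L}" using TL by auto
    then show ?thesis using a.rec2[of k] b.rec2[of k] 3 img[of "{k..T}"] eq kL by simp
  next
    case 4 then show ?thesis using a.g_post[of k] b.g_post[of k] eq kL by simp
  qed
qed



definition Gm :: "nat \<Rightarrow> nat \<Rightarrow> nat \<Rightarrow> real" where
  "Gm t y T = (\<Prod>b\<in>{int y..<2 * int y}. 1 / w t b) * (\<Prod>c\<in>{0..<int y}. w t c) * ((real T + 2) / (real t + real y + 2))^2"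

definition Cls :: "nat \<Rightarrow> nat \<Rightarrow> nat \<Rightarrow> nat \<Rightarrow> nat \<Rightarrow> bool list set" where
  "Cls L t y s T = {P \<in> meanders_to L 0. cls (height P) L t y s T}"

definition phi :: "nat \<Rightarrow> nat \<Rightarrow> nat \<Rightarrow> nat \<Rightarrow> nat \<Rightarrow> bool list \<Rightarrow> bool list" where
  "phi L t y s T P = list_of (gf (height P) y s t T) L"

lemma finite_meanders: "finite (meanders_to n m)"
proof -
  have "meanders_to n m \<subseteq> {xs. set xs \<subseteq> UNIV \<and> length xs = n}" unfolding meanders_to_def by auto
  moreover have "finite {xs :: bool list. set xs \<subseteq> UNIV \<and> length xs = n}"
    by (rule finite_lists_length_eq) simp
  ultimately show ?thesis by (rule finite_subset)
qed

lemma mweight_nonneg: "meander xs \<Longrightarrow> 0 \<le> mweight xs"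
proof -
  assume m: "meander xs"
  have "0 \<le> F (height xs) k" if "k < length xs" for k
  proof -
    have "height xs k \<le> int k + 1" using height_le[of xs k] by simp
    moreover have "0 \<le> height xs k" using m that unfolding meander_def by simp
    ultimately show ?thesis unfolding F_def by (auto intro!: less_imp_le[OF w_pos])
  qed
  then show ?thesis unfolding mweight_F by (intro prod_nonneg) auto
qed

context
  fixes L t y s T :: nat and P :: "bool list"
  assumes PC: "P \<in> Cls L t y s T"
begin

interpretation cls "height P" L t y s T using PC unfolding Cls_def by simp

lemma lenP: "length P = L" using PC unfolding Cls_def meanders_to_def by simp
lemma HL: "height P L = 0" using PC unfolding Cls_def meanders_to_def by simp

lemma ht_phi: "k \<le> L \<Longrightarrow> height (phi L t y s T P) k = g k"
  unfolding phi_def using height_list_of[of L g k] g_step g0 by simp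

lemma phi_mem: "phi L t y s T P \<in> meanders_to L 0"
  unfolding meanders_to_def meander_def
  using ht_phi g_nonneg g_post[of L] TL HL by (auto simp: phi_def)

lemma phi_weight: "mweight P * Gm t y T \<le> mweight (phi L t y s T P)"
proof -
  have "mweight (phi L t y s T P) = (\<Prod>k<L. F g k)"
    unfolding mweight_F by (auto simp: phi_def F_def ht_phi[unfolded phi_def] intro!: prod.cong)
  moreover have "mweight P = (\<Prod>k<L. F (height P) k)" unfolding mweight_F lenP ..
  moreover have "Gam = Gm t y T" unfolding Gam_def Gm_def ..
  ultimately show ?thesis using total by simp
qed

lemma Gm_pos: "0 < Gm t y T"
  unfolding Gm_def using y2t tT
  by (intro mult_pos_pos prod_pos divide_pos_pos) (auto intro!: w_pos)

end

lemma phi_inj: "inj_on (phi L t y s T) (Cls L t y s T)"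
proof (rule inj_onI)
  fix P1 P2 assume P1: "P1 \<in> Cls L t y s T" and P2: "P2 \<in> Cls L t y s T"
    and e: "phi L t y s T P1 = phi L t y s T P2"
  have c1: "cls (height P1) L t y s T" and c2: "cls (height P2) L t y s T"
    using P1 P2 unfolding Cls_def by auto
  have "gf (height P1) y s t T k = gf (height P2) y s t T k" if "k \<le> L" for k
    using ht_phi[OF P1 that] ht_phi[OF P2 that] e by simp
  then have "height P1 k = height P2 k" if "k \<le> L" for k
    using inj_H[OF c1 c2] that by blast
  then show "P1 = P2" using lenP[OF P1] lenP[OF P2] by (intro list_eq_by_heights) auto
qed

lemma class_sum:
  assumes "Cls L t y s T \<noteq> {}"
  shows "(\<Sum>P\<in>Cls L t y s T. mweight P) \<le> dnum L 0 / Gm t y T"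
proof -
  obtain P0 where P0: "P0 \<in> Cls L t y s T" using assms by auto
  have G: "0 < Gm t y T" using Gm_pos[OF P0] .
  have sub: "Cls L t y s T \<subseteq> meanders_to L 0" unfolding Cls_def by auto
  have fin: "finite (Cls L t y s T)" using sub finite_meanders by (rule finite_subset)
  have "(\<Sum>P\<in>Cls L t y s T. mweight P) * Gm t y T = (\<Sum>P\<in>Cls L t y s T. mweight P * Gm t y T)"
    by (simp add: sum_distrib_right)
  also have "\<dots> \<le> (\<Sum>P\<in>Cls L t y s T. mweight (phi L t y s T P))"
    by (intro sum_mono phi_weight)
  also have "\<dots> = (\<Sum>Q\<in>phi L t y s T ` Cls L t y s T. mweight Q)"
    using sum.reindex[OF phi_inj, of mweight] by (simp add: comp_def)
  also have "\<dots> \<le> (\<Sum>Q\<in>meanders_to L 0. mweight Q)"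
    using phi_mem finite_meanders
    by (intro sum_mono2) (auto intro!: mweight_nonneg simp: meanders_to_def)
  finally show ?thesis unfolding dnum_def using G by (simp add: pos_le_divide_eq)
qed



lemma inv_Gm:
  assumes "2 * int y \<le> int t"
  shows "1 / Gm t y T \<le> ((real t + 2) / (real t + 2 + 2 * real y))^y * ((real t + real y + 2) / (real T + 2))^2"
proof -
  define PB where "PB = (\<Prod>b\<in>{int y..<2 * int y}. w t b)"
  define PC where "PC = (\<Prod>c\<in>{0..<int y}. w t c)"
  define q where "q = (real t + 2) / (real t + 2 + 2 * real y)"
  have PCpos: "0 < PC" unfolding PC_def using assms by (intro prod_pos) (auto intro!: w_pos)
  have PBpos: "0 < PB" unfolding PB_def using assms by (intro prod_pos) (auto intro!: w_pos)
  have pp: "PB \<le> q ^ y * PC" unfolding PB_def PC_def q_def by (rule pair_prod[OF assms])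
  have inv: "(\<Prod>b\<in>{int y..<2 * int y}. 1 / w t b) = 1 / PB" unfolding PB_def
    by (simp add: prod_dividef)
  have G: "Gm t y T = PC / PB * ((real T + 2) / (real t + real y + 2))^2"
    unfolding Gm_def inv PC_def by simp
  have "1 / Gm t y T = (PB / PC) * ((real t + real y + 2) / (real T + 2))^2"
    unfolding G by (simp add: power_divide)
  also have "\<dots> \<le> q ^ y * ((real t + real y + 2) / (real T + 2))^2"
    using pp PCpos by (intro mult_right_mono) (auto simp: divide_simps)
  finally show ?thesis unfolding q_def .
qed

lemma tel1: "(\<Sum>T\<in>{a<..b}. 1 / (real T + 2)^2) \<le> 1 / (real a + 2) - 1 / (real (max a b) + 2)"
proof (induction b)
  case 0 then show ?case by simp
next
  case (Suc b)
  show ?case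
  proof (cases "a \<le> b")
    case True
    then have "{a<..Suc b} = insert (Suc b) {a<..b}" by auto
    then have "(\<Sum>T\<in>{a<..Suc b}. 1 / (real T + 2)^2) = 1 / (real b + 3)^2 + (\<Sum>T\<in>{a<..b}. 1 / (real T + 2)^2)"
      by (simp add: add.commute)
    also have "\<dots> \<le> 1 / (real b + 3)^2 + (1 / (real a + 2) - 1 / (real b + 2))"
      using Suc True by (simp add: max_def)
    also have "\<dots> \<le> 1 / (real a + 2) - 1 / (real (max a (Suc b)) + 2)"
    proof -
      have e: "1 / (real b + 2) - 1 / (real b + 3) = 1 / ((real b + 2) * (real b + 3))"
        by (simp add: field_simps)
      have "1 / (real b + 3)^2 \<le> 1 / ((real b + 2) * (real b + 3))"
        unfolding power2_eq_square by (intro divide_left_mono mult_right_mono mult_pos_pos) auto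
      then have "1 / (real b + 3)^2 \<le> 1 / (real b + 2) - 1 / (real b + 3)" using e by simp
      moreover have "1 / (real (max a (Suc b)) + 2) = 1 / (real b + 3)" using True by (simp add: max_def add.commute)
      ultimately show ?thesis by linarith
    qed
    finally show ?thesis .
  next
    case False
    then have "{a<..Suc b} = {}" by auto
    moreover have "max a (Suc b) = a" using False by simp
    ultimately show ?thesis by simp
  qed
qed

lemma tel1': "(\<Sum>T\<in>{a<..b}. 1 / (real T + 2)^2) \<le> 1 / (real a + 2)"
  using tel1[of a b] by (smt (verit) divide_nonneg_nonneg of_nat_0_le_iff)

lemma tel2: "(\<Sum>x\<in>{N<..n}. 1 / (real x)^2) \<le> 1 / real N - 1 / real (max N n)" if "N \<ge> 1"
proof (induction n)
  case 0 then show ?case by simp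
next
  case (Suc n)
  show ?case
  proof (cases "N \<le> n")
    case True
    then have "{N<..Suc n} = insert (Suc n) {N<..n}" by auto
    then have "(\<Sum>x\<in>{N<..Suc n}. 1 / (real x)^2) = 1 / (real n + 1)^2 + (\<Sum>x\<in>{N<..n}. 1 / (real x)^2)"
      by (simp add: add.commute)
    also have "\<dots> \<le> 1 / (real n + 1)^2 + (1 / real N - 1 / real n)"
      using Suc True by (simp add: max_def)
    also have "\<dots> \<le> 1 / real N - 1 / real (max N (Suc n))"
    proof -
      have n1: "real n \<ge> 1" using True that by simp
      have e: "1 / real n - 1 / (real n + 1) = 1 / (real n * (real n + 1))"
        using n1 by (simp add: field_simps)
      have "1 / (real n + 1)^2 \<le> 1 / (real n * (real n + 1))"
        unfolding power2_eq_square using n1 by (intro divide_left_mono mult_right_mono mult_pos_pos) auto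
      then have "1 / (real n + 1)^2 \<le> 1 / real n - 1 / (real n + 1)" using e by simp
      moreover have "1 / real (max N (Suc n)) = 1 / (real n + 1)" using True by (simp add: max_def add.commute)
      ultimately show ?thesis by linarith
    qed
    finally show ?thesis .
  next
    case False
    then have "{N<..Suc n} = {}" by auto
    moreover have "max N (Suc n) = N" using False by simp
    ultimately show ?thesis by simp
  qed
qed

lemma tel2': "N \<ge> 1 \<Longrightarrow> (\<Sum>x\<in>{N<..n}. 1 / (real x)^2) \<le> 1 / real N"
  using tel2[of N n] by (smt (verit) divide_nonneg_nonneg of_nat_0_le_iff)

lemma exp_half_le: fixes u :: real assumes "0 \<le> u" "u \<le> 1" shows "exp (u / 2) \<le> 1 + u"
proof -
  have e: "1 - u / 2 \<le> exp (- (u / 2))" using exp_ge_add_one_self[of "- (u/2)"] by simp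
  have p: "0 < 1 - u / 2" using assms by simp
  have "exp (u / 2) = 1 / exp (- (u / 2))" by (simp add: exp_minus inverse_eq_divide)
  also have "\<dots> \<le> 1 / (1 - u / 2)" using e p by (intro divide_left_mono) auto
  also have "\<dots> \<le> 1 + u"
  proof -
    have "1 \<le> (1 + u) * (1 - u / 2)" using assms by (simp add: algebra_simps power2_eq_square) (smt (verit) mult_left_le)
    then show ?thesis using p by (simp add: divide_simps)
  qed
  finally show ?thesis .
qed

lemma qbound:
  fixes x y :: nat
  assumes x1: "1 \<le> x" and yx: "y \<le> x" and yp: "real y > real x powr (3/4)"
  shows "((real x + 1) / (real x + 1 + real y))^y \<le> 40^10 / (real x)^5"
proof -
  define u where "u = real y / (real x + 1)"
  have u: "0 \<le> u" "u \<le> 1" unfolding u_def using yx by (auto simp: divide_simps)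
  have q: "(real x + 1) / (real x + 1 + real y) = 1 / (1 + u)" unfolding u_def by (simp add: field_simps)
  have xpos: "0 < real x" using x1 by simp
  have "(real x powr (3/4))^2 = real x powr (3/4) * real x powr (3/4)" by (simp add: power2_eq_square)
  also have "\<dots> = real x powr (3/4 + 3/4)" by (rule powr_add[symmetric])
  also have "(3/4 + 3/4 :: real) = 1 + 1/2" by simp
  also have "real x powr (1 + 1/2) = real x powr 1 * real x powr (1/2)" by (rule powr_add)
  also have "\<dots> = real x * sqrt (real x)" using xpos by (simp add: powr_half_sqrt)
  finally have p32: "(real x powr (3/4))^2 = real x * sqrt (real x)" .
  have y2: "real x * sqrt (real x) \<le> (real y)^2"
    unfolding p32[symmetric] using yp by (intro power_mono) auto
  have "sqrt (real x) / 4 \<le> real y * u / 2"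
  proof -
    have "sqrt (real x) / 4 = real x * sqrt (real x) / (4 * real x)" using xpos by simp
    also have "\<dots> \<le> (real y)^2 / (2 * (real x + 1))"
      using y2 xpos x1 by (intro frac_le) auto
    also have "\<dots> = real y * u / 2" unfolding u_def by (simp add: power2_eq_square)
    finally show ?thesis .
  qed
  then have "exp (sqrt (real x) / 4) \<le> exp (real y * (u / 2))" by simp
  also have "\<dots> = exp (u / 2) ^ y" by (simp add: exp_of_nat_mult[symmetric])
  also have "\<dots> \<le> (1 + u) ^ y" using exp_half_le[OF u] by (intro power_mono) auto
  finally have E: "exp (sqrt (real x) / 4) \<le> (1 + u) ^ y" .
  have sq0: "0 \<le> sqrt (real x)" by simp
  have "(sqrt (real x) / 40)^10 \<le> (1 + (sqrt (real x) / 4) / real (10::nat))^10"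
  proof (rule power_mono)
    have "sqrt (real x) / 4 / real (10::nat) = sqrt (real x) / 40" by simp
    then show "sqrt (real x) / 40 \<le> 1 + sqrt (real x) / 4 / real (10::nat)" by linarith
    show "0 \<le> sqrt (real x) / 40" using sq0 by simp
  qed
  also have "\<dots> \<le> exp (sqrt (real x) / 4)"
  proof (rule exp_ge_one_plus_x_over_n_power_n)
    have a: "(0::real) \<le> sqrt (real x) / 4" by simp
    have b: "- real (10::nat) \<le> (0::real)" by simp
    from a b show "sqrt (real x) / 4 \<ge> - real (10::nat)" by linarith
  qed simp
  finally have E2: "(sqrt (real x) / 40)^10 \<le> exp (sqrt (real x) / 4)" .
  have s10: "(sqrt (real x) / 40)^10 = (real x)^5 / 40^10"
  proof -
    have "(sqrt (real x))^10 = ((sqrt (real x))^2)^5" unfolding power_mult[symmetric] by simp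
    also have "\<dots> = (real x)^5" using xpos by simp
    finally show ?thesis by (simp add: power_divide)
  qed
  have low: "(real x)^5 / 40^10 \<le> (1 + u)^y" using E E2 s10 by simp
  have pos: "0 < (real x)^5 / 40^10" using xpos by simp
  have "((real x + 1) / (real x + 1 + real y))^y = 1 / (1 + u)^y" unfolding q by (simp add: power_divide)
  also have "\<dots> \<le> 1 / ((real x)^5 / 40^10)"
  proof (rule divide_left_mono)
    show "(real x)^5 / 40^10 \<le> (1 + u)^y" by (rule low)
    have "0 < (1 + u)^y" using u by simp
    then show "0 < (1 + u)^y * ((real x)^5 / 40^10)" using pos by simp
  qed simp
  also have "\<dots> = 40^10 / (real x)^5" by simp
  finally show ?thesis .
qed



lemma bad_point:
  assumes P: "P \<in> meanders_to (2*n) 0" and hb: "hits_bad (real N0) P" and N0: "N0 \<ge> 1"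
  shows "\<exists>x y s T. x \<in> {x\<in>{1..n}. real N0 < real x} \<and> y \<in> {y\<in>{1..x}. real x powr (3/4) < real y}
     \<and> s \<in> {..<2*x} \<and> T \<in> {2*x<..2*n} \<and> P \<in> Cls (2*n) (2*x) y s T"
proof -
  define H where "H = height P"
  have lenP: "length P = 2*n" and mP: "meander P" and HL: "H (2*n) = 0"
    using P unfolding meanders_to_def H_def by auto
  have nonneg: "\<And>k. k \<le> 2*n \<Longrightarrow> 0 \<le> H k" using mP lenP unfolding meander_def H_def by auto
  have step: "\<And>k. k < 2*n \<Longrightarrow> H (Suc k) = H k + 1 \<or> H (Suc k) = H k - 1"
    using height_step lenP unfolding H_def by auto
  obtain x0 y0 :: int where x0: "real_of_int x0 > real N0" and y0: "real_of_int y0 > real_of_int x0 powr (3/4)"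
    and pt: "passes_through P (2*x0) (2*y0)"
    using hb unfolding hits_bad_def by blast
  obtain k where k: "k \<le> 2*n" "int k = 2*x0" "H k = 2*y0"
    using pt lenP unfolding passes_through_def H_def by auto
  have x0p: "x0 \<ge> 1" using x0 N0 by linarith
  have "real_of_int x0 powr (3/4) > 0" using x0p by simp
  then have y0p: "y0 \<ge> 1" using y0 by linarith
  define x where "x = nat x0"
  define y where "y = nat y0"
  have xx: "int x = x0" "real x = real_of_int x0" using x0p unfolding x_def by auto
  have yy: "int y = y0" "real y = real_of_int y0" using y0p unfolding y_def by auto
  define t where "t = 2 * x"
  have kt: "k = t" using k(2) xx unfolding t_def by simp
  have Ht: "H t = 2 * int y" using k kt yy by simp
  have yx: "y \<le> x" using height_le[of P k] k kt yy xx unfolding H_def t_def by simp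
  have xn: "x \<le> n" using k kt unfolding t_def by simp
  have y1: "y \<ge> 1" using y0p yy by simp
  have x1: "x \<ge> 1" using x0p xx by simp
  define S where "S = {j. j \<le> t \<and> H j \<le> int y}"
  have fS: "finite S" unfolding S_def by simp
  have S0: "0 \<in> S" unfolding S_def using height_0 H_def by simp
  define s where "s = Max S"
  have sS: "s \<in> S" unfolding s_def using fS S0 by (intro Max_in) auto
  have above1: "H j > int y" if "s < j" "j \<le> t" for j
  proof (rule ccontr)
    assume "\<not> H j > int y"
    then have "j \<in> S" unfolding S_def using that by auto
    then have "j \<le> s" unfolding s_def using fS by (intro Max_ge) auto
    then show False using that by simp
  qed
  have st: "s < t" using sS Ht y1 unfolding S_def by (cases "s = t") auto
  have Hs: "H s = int y"
  proof -
    have "H (Suc s) > int y" using above1[of "Suc s"] st by simp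
    moreover have "H s \<le> int y" using sS unfolding S_def by simp
    moreover have "Suc s \<le> 2*n" using st k kt by simp
    ultimately show ?thesis using step[of s] by auto
  qed
  define U where "U = {j. t \<le> j \<and> j \<le> 2*n \<and> H j \<le> int y}"
  have fU: "finite U" unfolding U_def by simp
  have U0: "2*n \<in> U" unfolding U_def using HL k kt by simp
  define T where "T = Min U"
  have TU: "T \<in> U" unfolding T_def using fU U0 by (intro Min_in) auto
  have above2: "H j > int y" if "t \<le> j" "j < T" for j
  proof (rule ccontr)
    assume "\<not> H j > int y"
    moreover have "j \<le> 2*n" using that TU unfolding U_def by simp
    ultimately have "j \<in> U" unfolding U_def using that by auto
    then have "T \<le> j" unfolding T_def using fU by (intro Min_le) auto
    then show False using that by simp
  qed
  have tT: "t < T" using TU Ht y1 unfolding U_def by (cases "T = t") auto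
  have HT: "H T = int y"
  proof -
    obtain j where j: "T = Suc j" using tT by (cases T) auto
    have "H j > int y" using above2[of j] tT j by simp
    moreover have "H T \<le> int y" using TU unfolding U_def by simp
    moreover have "j < 2*n" using TU j unfolding U_def by simp
    ultimately show ?thesis using step[of j] j by auto
  qed
  have TL: "T \<le> 2*n" using TU unfolding U_def by simp
  have "cls H (2*n) t y s T"
    by unfold_locales (use step nonneg Ht y1 st Hs above1 tT TL HT above2 in \<open>auto simp: H_def\<close>)
  then have "P \<in> Cls (2*n) t y s T" using P unfolding Cls_def H_def by simp
  moreover have "x \<in> {x\<in>{1..n}. real N0 < real x}" using x1 xn xx x0 by simp
  moreover have "y \<in> {y\<in>{1..x}. real x powr (3/4) < real y}" using y1 yx xx yy y0 by simp
  moreover have "s \<in> {..<2*x}" using st unfolding t_def by simp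
  moreover have "T \<in> {2*x<..2*n}" using tT TL unfolding t_def by simp
  ultimately show ?thesis unfolding t_def by blast
qed



lemma dnum_nonneg: "0 \<le> dnum n m"
  unfolding dnum_def by (intro sum_nonneg mweight_nonneg) (auto simp: meanders_to_def)

lemma class_bound:
  assumes yx: "y \<le> x"
  shows "(\<Sum>P\<in>Cls (2*n) (2*x) y s T. mweight P)
     \<le> ((real x + 1) / (real x + 1 + real y))^y * ((2 * real x + real y + 2) / (real T + 2))^2 * dnum (2*n) 0"
proof (cases "Cls (2*n) (2*x) y s T = {}")
  case True
  then show ?thesis using dnum_nonneg by (simp add: mult_nonneg_nonneg)
next
  case False
  have Z: "0 \<le> dnum (2*n) 0" by (rule dnum_nonneg)
  have "(\<Sum>P\<in>Cls (2*n) (2*x) y s T. mweight P) \<le> dnum (2*n) 0 / Gm (2*x) y T"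
    by (rule class_sum[OF False])
  also have "\<dots> = dnum (2*n) 0 * (1 / Gm (2*x) y T)" by simp
  also have "\<dots> \<le> dnum (2*n) 0 * (((real (2*x) + 2) / (real (2*x) + 2 + 2 * real y))^y * ((real (2*x) + real y + 2) / (real T + 2))^2)"
    using Z inv_Gm[of y "2*x" T] yx by (intro mult_left_mono) auto
  also have "(real (2*x) + 2) / (real (2*x) + 2 + 2 * real y) = (real x + 1) / (real x + 1 + real y)"
    by (simp add: field_simps)
  finally show ?thesis by (simp add: ac_simps)
qed

lemma swap4:
  "(\<Sum>p\<in>A. \<Sum>x\<in>X. \<Sum>y\<in>Y x. \<Sum>s\<in>S x. \<Sum>T\<in>U x. f p x y s T)
   = (\<Sum>x\<in>X. \<Sum>y\<in>Y x. \<Sum>s\<in>S x. \<Sum>T\<in>U x. \<Sum>p\<in>A. f p x y s T)"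
proof -
  have "(\<Sum>p\<in>A. \<Sum>x\<in>X. \<Sum>y\<in>Y x. \<Sum>s\<in>S x. \<Sum>T\<in>U x. f p x y s T)
     = (\<Sum>x\<in>X. \<Sum>p\<in>A. \<Sum>y\<in>Y x. \<Sum>s\<in>S x. \<Sum>T\<in>U x. f p x y s T)" by (rule sum.swap)
  also have "\<dots> = (\<Sum>x\<in>X. \<Sum>y\<in>Y x. \<Sum>p\<in>A. \<Sum>s\<in>S x. \<Sum>T\<in>U x. f p x y s T)"
    by (rule sum.cong[OF refl], rule sum.swap)
  also have "\<dots> = (\<Sum>x\<in>X. \<Sum>y\<in>Y x. \<Sum>s\<in>S x. \<Sum>p\<in>A. \<Sum>T\<in>U x. f p x y s T)"
    by (rule sum.cong[OF refl], rule sum.cong[OF refl], rule sum.swap)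
  also have "\<dots> = (\<Sum>x\<in>X. \<Sum>y\<in>Y x. \<Sum>s\<in>S x. \<Sum>T\<in>U x. \<Sum>p\<in>A. f p x y s T)"
    by (rule sum.cong[OF refl], rule sum.cong[OF refl], rule sum.cong[OF refl], rule sum.swap)
  finally show ?thesis .
qed



lemma per_xy:
  fixes x y n :: nat and Z :: real
  assumes x1: "1 \<le> x" and y1: "1 \<le> y" and yx: "y \<le> x" and yp: "real x powr (3/4) < real y" and Z: "0 \<le> Z"
  shows "(\<Sum>s\<in>{..<2*x}. \<Sum>T\<in>{2*x<..2*n}. ((real x + 1) / (real x + 1 + real y))^y * ((2 * real x + real y + 2) / (real T + 2))^2 * Z)
     \<le> 25 * 40^10 / (real x)^3 * Z"
proof -
  define q where "q = ((real x + 1) / (real x + 1 + real y))^y"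
  define a where "a = 2 * real x + real y + 2"
  have q0: "0 \<le> q" unfolding q_def by simp
  have qb: "q \<le> 40^10 / (real x)^5" unfolding q_def using qbound[OF x1 yx yp] .
  have a2: "a^2 \<le> 25 * (real x)^2"
  proof -
    have "0 \<le> a" "a \<le> 5 * real x" unfolding a_def using yx x1 by auto
    then have "a^2 \<le> (5 * real x)^2" by (intro power_mono) auto
    then show ?thesis by (simp add: power_mult_distrib)
  qed
  have inner: "(\<Sum>T\<in>{2*x<..2*n}. q * (a / (real T + 2))^2 * Z) \<le> q * a^2 * Z / (2 * real x + 2)"
  proof -
    have "(\<Sum>T\<in>{2*x<..2*n}. q * (a / (real T + 2))^2 * Z) = q * a^2 * Z * (\<Sum>T\<in>{2*x<..2*n}. 1 / (real T + 2)^2)"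
      by (simp add: sum_distrib_left power_divide)
    also have "\<dots> \<le> q * a^2 * Z * (1 / (real (2*x) + 2))"
      using tel1'[of "2*x" "2*n"] q0 Z by (intro mult_left_mono) auto
    finally show ?thesis by simp
  qed
  have "(\<Sum>s\<in>{..<2*x}. \<Sum>T\<in>{2*x<..2*n}. q * (a / (real T + 2))^2 * Z) \<le> (\<Sum>s\<in>{..<2*x}. q * a^2 * Z / (2 * real x + 2))"
    using inner by (intro sum_mono) auto
  also have "\<dots> = 2 * real x * (q * a^2 * Z / (2 * real x + 2))" by simp
  also have "\<dots> \<le> q * a^2 * Z"
  proof -
    have "0 \<le> q * a^2 * Z" using q0 Z by simp
    moreover have "2 * real x / (2 * real x + 2) \<le> 1" by simp
    ultimately have "2 * real x / (2 * real x + 2) * (q * a^2 * Z) \<le> 1 * (q * a^2 * Z)"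
      by (intro mult_right_mono) auto
    then show ?thesis by simp
  qed
  also have "\<dots> \<le> (40^10 / (real x)^5) * (25 * (real x)^2) * Z"
    using qb a2 q0 Z by (intro mult_right_mono mult_mono) auto
  also have "\<dots> = 25 * 40^10 / (real x)^3 * Z"
    using x1 by (simp add: field_simps power_numeral_reduce)
  finally show ?thesis unfolding q_def a_def .
qed



lemma bad_bound:
  assumes N0: "N0 \<ge> 1"
  shows "(\<Sum>P\<in>{P\<in>meanders_to (2*n) 0. hits_bad (real N0) P}. mweight P) \<le> 25 * 40^10 / real N0 * dnum (2*n) 0"
proof -
  define Dy where "Dy = meanders_to (2*n) 0"
  define Z where "Z = dnum (2*n) 0"
  define X where "X = {x\<in>{1..n}. real N0 < real x}"
  define Y where "Y x = {y\<in>{1..x}. real x powr (3/4) < real y}" for x :: nat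
  define K :: real where "K = 25 * 40^10"
  define G where "G P = (\<Sum>x\<in>X. \<Sum>y\<in>Y x. \<Sum>s\<in>{..<2*x}. \<Sum>T\<in>{2*x<..2*n}.
      if P \<in> Cls (2*n) (2*x) y s T then mweight P else 0)" for P
  have Z0: "0 \<le> Z" unfolding Z_def by (rule dnum_nonneg)
  have fX: "finite X" unfolding X_def by simp
  have fY: "finite (Y x)" for x unfolding Y_def by simp
  have wn: "P \<in> Dy \<Longrightarrow> 0 \<le> mweight P" for P
    unfolding Dy_def meanders_to_def by (auto intro: mweight_nonneg)
  have Gn: "P \<in> Dy \<Longrightarrow> 0 \<le> G P" for P
    unfolding G_def using wn by (intro sum_nonneg) auto
  have bad_le: "mweight P \<le> G P" if P: "P \<in> Dy" and hb: "hits_bad (real N0) P" for P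
  proof -
    obtain x y s T where xy: "x \<in> X" "y \<in> Y x" "s \<in> {..<2*x}" "T \<in> {2*x<..2*n}" "P \<in> Cls (2*n) (2*x) y s T"
      using bad_point[OF P[unfolded Dy_def] hb N0] unfolding X_def Y_def by blast
    define f4 where "f4 x y s T = (if P \<in> Cls (2*n) (2*x) y s T then mweight P else 0)" for x y s T
    have f4n: "0 \<le> f4 x y s T" for x y s T unfolding f4_def using wn P by simp
    have "mweight P = f4 x y s T" unfolding f4_def using xy by simp
    also have "\<dots> \<le> (\<Sum>T\<in>{2*x<..2*n}. f4 x y s T)"
      using xy f4n by (intro member_le_sum) auto
    also have "\<dots> \<le> (\<Sum>s\<in>{..<2*x}. \<Sum>T\<in>{2*x<..2*n}. f4 x y s T)"
      using xy f4n by (intro member_le_sum sum_nonneg) auto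
    also have "\<dots> \<le> (\<Sum>y\<in>Y x. \<Sum>s\<in>{..<2*x}. \<Sum>T\<in>{2*x<..2*n}. f4 x y s T)"
      using xy f4n fY by (intro member_le_sum sum_nonneg) auto
    also have "\<dots> \<le> (\<Sum>x\<in>X. \<Sum>y\<in>Y x. \<Sum>s\<in>{..<2*x}. \<Sum>T\<in>{2*x<..2*n}. f4 x y s T)"
      using xy f4n fY fX by (intro member_le_sum sum_nonneg) auto
    finally show ?thesis unfolding G_def f4_def .
  qed
  have fD: "finite Dy" unfolding Dy_def by (rule finite_meanders)
  have "(\<Sum>P\<in>{P\<in>Dy. hits_bad (real N0) P}. mweight P) \<le> (\<Sum>P\<in>{P\<in>Dy. hits_bad (real N0) P}. G P)"
    using bad_le by (intro sum_mono) auto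
  also have "\<dots> \<le> (\<Sum>P\<in>Dy. G P)"
    using fD Gn by (intro sum_mono2) auto
  also have "\<dots> = (\<Sum>x\<in>X. \<Sum>y\<in>Y x. \<Sum>s\<in>{..<2*x}. \<Sum>T\<in>{2*x<..2*n}. \<Sum>P\<in>Dy.
      if P \<in> Cls (2*n) (2*x) y s T then mweight P else 0)"
    unfolding G_def by (rule swap4)
  also have "\<dots> = (\<Sum>x\<in>X. \<Sum>y\<in>Y x. \<Sum>s\<in>{..<2*x}. \<Sum>T\<in>{2*x<..2*n}. \<Sum>P\<in>Cls (2*n) (2*x) y s T. mweight P)"
  proof -
    have "(\<Sum>P\<in>Dy. if P \<in> Cls (2*n) (2*x) y s T then mweight P else 0) = (\<Sum>P\<in>Cls (2*n) (2*x) y s T. mweight P)"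
      for x y s T
    proof -
      have "Dy \<inter> Cls (2*n) (2*x) y s T = Cls (2*n) (2*x) y s T" unfolding Dy_def Cls_def by auto
      then show ?thesis using sum.inter_restrict[OF fD, of mweight "Cls (2*n) (2*x) y s T"] by simp
    qed
    then show ?thesis by simp
  qed
  also have "\<dots> \<le> (\<Sum>x\<in>X. \<Sum>y\<in>Y x. \<Sum>s\<in>{..<2*x}. \<Sum>T\<in>{2*x<..2*n}.
      ((real x + 1) / (real x + 1 + real y))^y * ((2 * real x + real y + 2) / (real T + 2))^2 * Z)"
    unfolding Z_def using class_bound unfolding Y_def by (intro sum_mono) auto
  also have "\<dots> \<le> (\<Sum>x\<in>X. \<Sum>y\<in>Y x. K / (real x)^3 * Z)"
    unfolding K_def using per_xy Z0 unfolding X_def Y_def by (intro sum_mono) auto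
  also have "\<dots> \<le> (\<Sum>x\<in>X. K / (real x)^2 * Z)"
  proof (rule sum_mono)
    fix x assume x: "x \<in> X"
    then have x1: "real x \<ge> 1" unfolding X_def by simp
    have "Y x \<subseteq> {1..x}" unfolding Y_def by auto
    then have cY: "card (Y x) \<le> x" using card_mono[of "{1..x}" "Y x"] by simp
    have "(\<Sum>y\<in>Y x. K / (real x)^3 * Z) = real (card (Y x)) * (K / (real x)^3 * Z)" by simp
    also have "\<dots> \<le> real x * (K / (real x)^3 * Z)"
      using cY Z0 unfolding K_def by (intro mult_right_mono) auto
    also have "\<dots> = K / (real x)^2 * Z" using x1 by (simp add: field_simps power_numeral_reduce)
    finally show "(\<Sum>y\<in>Y x. K / (real x)^3 * Z) \<le> K / (real x)^2 * Z" .
  qed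
  also have "\<dots> \<le> (\<Sum>x\<in>{N0<..n}. K / (real x)^2 * Z)"
    using Z0 unfolding K_def X_def by (intro sum_mono2) auto
  also have "\<dots> = K * Z * (\<Sum>x\<in>{N0<..n}. 1 / (real x)^2)" by (simp add: sum_distrib_left)
  also have "\<dots> \<le> K * Z * (1 / real N0)"
    using tel2'[OF N0, of n] Z0 unfolding K_def by (intro mult_left_mono) auto
  finally show ?thesis unfolding K_def Z_def Dy_def by simp
qed

theorem lemma4p6:
  shows "\<forall>\<epsilon>::real. \<epsilon> > 0 \<longrightarrow> (\<exists>N::real. N > 0 \<and>
           (\<forall>n::nat. n > 0 \<longrightarrow> dnum (2*n) 0 \<le> (1 + \<epsilon>) * dtilde N (2*n) 0))"
proof (intro allI impI)
  fix \<epsilon> :: real assume e: "\<epsilon> > 0"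
  define K :: real where "K = 25 * 40^10"
  define d where "d = \<epsilon> / (1 + \<epsilon>)"
  have d: "0 < d" "d < 1" unfolding d_def using e by auto
  define N0 where "N0 = nat \<lceil>K / d\<rceil> + 1"
  have N01: "N0 \<ge> 1" unfolding N0_def by simp
  have KN: "K / real N0 \<le> d"
  proof -
    have "K / d \<le> real N0" unfolding N0_def by linarith
    then have "K \<le> d * real N0" using d by (simp add: divide_simps mult.commute)
    then show ?thesis using N01 by (simp add: divide_simps mult.commute)
  qed
  show "\<exists>N::real. N > 0 \<and> (\<forall>n::nat. n > 0 \<longrightarrow> dnum (2*n) 0 \<le> (1 + \<epsilon>) * dtilde N (2*n) 0)"
  proof (intro exI[of _ "real N0"] conjI allI impI)
    show "0 < real N0" using N01 by simp
    fix n :: nat assume "n > 0"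
    define Dy where "Dy = meanders_to (2*n) 0"
    have fD: "finite Dy" unfolding Dy_def by (rule finite_meanders)
    have split: "dnum (2*n) 0 = dtilde (real N0) (2*n) 0 + (\<Sum>P\<in>{P\<in>Dy. hits_bad (real N0) P}. mweight P)"
    proof -
      have "Dy = {P\<in>Dy. \<not> hits_bad (real N0) P} \<union> {P\<in>Dy. hits_bad (real N0) P}" by auto
      then have "(\<Sum>P\<in>Dy. mweight P) = (\<Sum>P\<in>{P\<in>Dy. \<not> hits_bad (real N0) P}. mweight P) + (\<Sum>P\<in>{P\<in>Dy. hits_bad (real N0) P}. mweight P)"
        using fD by (subst sum.union_disjoint[symmetric]) auto
      then show ?thesis unfolding dnum_def dtilde_def Dy_def by simp
    qed
    have bb: "(\<Sum>P\<in>{P\<in>Dy. hits_bad (real N0) P}. mweight P) \<le> d * dnum (2*n) 0"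
    proof -
      have "(\<Sum>P\<in>{P\<in>Dy. hits_bad (real N0) P}. mweight P) \<le> K / real N0 * dnum (2*n) 0"
        using bad_bound[OF N01, of n] unfolding K_def Dy_def by simp
      also have "\<dots> \<le> d * dnum (2*n) 0" using KN dnum_nonneg by (intro mult_right_mono) auto
      finally show ?thesis .
    qed
    have A: "dnum (2*n) 0 * (1 - d) \<le> dtilde (real N0) (2*n) 0" using split bb by (simp add: algebra_simps)
    have h: "(1 + \<epsilon>) * (1 - d) = 1" unfolding d_def using e by (simp add: field_simps)
    have "dnum (2*n) 0 = dnum (2*n) 0 * ((1 + \<epsilon>) * (1 - d))" using h by simp
    also have "\<dots> = (1 + \<epsilon>) * (dnum (2*n) 0 * (1 - d))" by (simp add: ac_simps)
    also have "\<dots> \<le> (1 + \<epsilon>) * dtilde (real N0) (2*n) 0"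
      using A e by (intro mult_left_mono) auto
    finally show "dnum (2*n) 0 \<le> (1 + \<epsilon>) * dtilde (real N0) (2*n) 0" .
  qed
qed


end
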